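(* Let $d\ge2$, let $u_1,\dots,u_\ell$ be an enumeration of the elementary matrices $I+E_{ij}$ ($i\ne j$) in $\operatorname{SL}_d(\mathbb{Z})$, extended cyclically by $u_m=u_{m\bmod \ell}$, and for $N\ge1$ let $\Gamma_N=\{u_1^{k_1}\cdots u_N^{k_N}:k_i\in\mathbb{Z}\}$, acting on $\mathfrak{sl}_d(\mathbb{Z})$ by conjugation. Then there exist constants $Q,N<\infty$ such that for every companion matrix $c_p\in\mathfrak{sl}_d(\mathbb{Z})$ (i.e. $p$ a monic integer polynomial of degree $d$ with vanishing $t^{d-1}$-coefficient), the set $\Gamma_Nc_p=\{\gamma c_p\gamma^{-1}:\gamma\in\Gamma_N\}$ is $Q$-coset fleeing in $\mathfrak{sl}_d(\mathbb{Z})$ and hyperplane-fleeing in $\mathfrak{sl}_d(\mathbb{R})$.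
   Context: $E_{ij}$ is the matrix unit with $1$ in position $(i,j)$. $\mathfrak{sl}_d(\mathbb{Z})$ is the additive group of integer $d\times d$ trace-zero matrices. Companion matrix: for $p(t)=a_0+a_1t+\dots+a_{d-1}t^{d-1}+t^d$, $c_p$ has $1$'s on the subdiagonal, last column $(-a_0,\dots,-a_{d-1})^T$, and zeros elsewhere. For an abelian group $\Lambda$, $S\subset\Lambda$ is $Q$-coset fleeing if for every subgroup $W\le\Lambda$ of index $>Q$, $S$ is not contained in a coset of $W$. A subset of a real vector space is hyperplane-fleeing if it is not contained in any proper affine subspace. *)

theory Defs
  imports "Jordan_Normal_Form.Matrix" "HOL-Computational_Algebra.Polynomial"
begin

(* All matrices are d x d, indices 0..d-1 (the paper's i,j shifted by one). *)

definition mtrace :: "'a::comm_ring_1 mat \<Rightarrow> 'a" where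
  "mtrace A = (\<Sum>i<dim_row A. A $$ (i, i))"

definition sl :: "nat \<Rightarrow> int mat set" where
  "sl d = {A \<in> carrier_mat d d. mtrace A = 0}"

definition sl_real :: "nat \<Rightarrow> real mat set" where
  "sl_real d = {A \<in> carrier_mat d d. mtrace A = 0}"

definition matunit :: "nat \<Rightarrow> nat \<Rightarrow> nat \<Rightarrow> int mat" where
  "matunit d i j = mat d d (\<lambda>(a, b). if a = i \<and> b = j then 1 else 0)"

definition elem_mat :: "nat \<Rightarrow> nat \<times> nat \<Rightarrow> int mat" where
  "elem_mat d ij = 1\<^sub>m d + matunit d (fst ij) (snd ij)"

text \<open>Inverse of a d x d matrix (meaningful for invertible ones).\<close>
definition minv :: "nat \<Rightarrow> int mat \<Rightarrow> int mat" where
  "minv d A = (SOME B. B \<in> carrier_mat d d \<and> A * B = 1\<^sub>m d \<and> B * A = 1\<^sub>m d)"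

definition zpow :: "nat \<Rightarrow> int mat \<Rightarrow> int \<Rightarrow> int mat" where
  "zpow d A k = (if 0 \<le> k then A ^\<^sub>m nat k else (minv d A) ^\<^sub>m nat (- k))"

definition u_seq :: "nat \<Rightarrow> (nat \<times> nat) list \<Rightarrow> nat \<Rightarrow> int mat" where
  "u_seq d es m = elem_mat d (es ! ((m - 1) mod length es))"

fun word_prod :: "nat \<Rightarrow> (nat \<times> nat) list \<Rightarrow> (nat \<Rightarrow> int) \<Rightarrow> nat \<Rightarrow> int mat" where
  "word_prod d es k 0 = 1\<^sub>m d"
| "word_prod d es k (Suc n) = word_prod d es k n * zpow d (u_seq d es (Suc n)) (k (Suc n))"

definition Gamma :: "nat \<Rightarrow> (nat \<times> nat) list \<Rightarrow> nat \<Rightarrow> int mat set" where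
  "Gamma d es N = {word_prod d es k N | k. True}"

definition orbit :: "nat \<Rightarrow> (nat \<times> nat) list \<Rightarrow> nat \<Rightarrow> int mat \<Rightarrow> int mat set" where
  "orbit d es N c = {g * c * minv d g | g. g \<in> Gamma d es N}"

definition companion :: "nat \<Rightarrow> int poly \<Rightarrow> int mat" where
  "companion d p = mat d d (\<lambda>(i, j). if i = j + 1 then 1
                                     else if j = d - 1 then - coeff p i else 0)"

definition sl_subgroup :: "nat \<Rightarrow> int mat set \<Rightarrow> bool" where
  "sl_subgroup d W \<longleftrightarrow> W \<subseteq> sl d \<and> 0\<^sub>m d d \<in> W \<and>
     (\<forall>x\<in>W. \<forall>y\<in>W. x + y \<in> W) \<and> (\<forall>x\<in>W. - x \<in> W)"

definition sl_cosets :: "nat \<Rightarrow> int mat set \<Rightarrow> int mat set set" where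
  "sl_cosets d W = {(\<lambda>w. a + w) ` W | a. a \<in> sl d}"

text \<open>"index of W > Q" (index possibly infinite).\<close>
definition index_gt :: "nat \<Rightarrow> int mat set \<Rightarrow> nat \<Rightarrow> bool" where
  "index_gt d W Q \<longleftrightarrow> \<not> (finite (sl_cosets d W) \<and> card (sl_cosets d W) \<le> Q)"

definition coset_fleeing :: "nat \<Rightarrow> nat \<Rightarrow> int mat set \<Rightarrow> bool" where
  "coset_fleeing d Q S \<longleftrightarrow>
     (\<forall>W. sl_subgroup d W \<and> index_gt d W Q \<longrightarrow> \<not> (\<exists>C\<in>sl_cosets d W. S \<subseteq> C))"

definition affine_sub :: "nat \<Rightarrow> real mat set \<Rightarrow> bool" where
  "affine_sub d A \<longleftrightarrow> A \<subseteq> sl_real d \<and>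
     (\<forall>x\<in>A. \<forall>y\<in>A. \<forall>t::real. (1 - t) \<cdot>\<^sub>m x + t \<cdot>\<^sub>m y \<in> A)"

definition hyperplane_fleeing :: "nat \<Rightarrow> real mat set \<Rightarrow> bool" where
  "hyperplane_fleeing d S \<longleftrightarrow>
     (\<forall>A. affine_sub d A \<and> A \<noteq> sl_real d \<longrightarrow> \<not> S \<subseteq> A)"

end

theory Submission
  imports Defs
begin


definition ev :: "nat \<Rightarrow> nat \<Rightarrow> nat \<Rightarrow> int \<Rightarrow> int mat" where
  "ev d i j t = 1\<^sub>m d + t \<cdot>\<^sub>m matunit d i j"

definition cj :: "nat \<Rightarrow> nat \<Rightarrow> nat \<Rightarrow> int \<Rightarrow> int mat \<Rightarrow> int mat" where
  "cj d i j t M = ev d i j t * M * ev d i j (- t)"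

lemma matunit_carrier[simp]: "matunit d i j \<in> carrier_mat d d"
  by (simp add: matunit_def)

lemma ev_carrier[simp]: "ev d i j t \<in> carrier_mat d d"
  by (simp add: ev_def)

lemma ev_dims[simp]: "dim_row (ev d i j t) = d" "dim_col (ev d i j t) = d"
  by (simp_all add: ev_def matunit_def)

lemma ev_index[simp]: "k < d \<Longrightarrow> l < d \<Longrightarrow> ev d i j t $$ (k, l) =
   (if k = l then 1 else 0) + (if k = i \<and> l = j then t else 0)"
  by (simp add: ev_def matunit_def)

lemma ev_mult_left:
  assumes M: "M \<in> carrier_mat d n" and k: "k < d" and l: "l < n" and j: "j < d"
  shows "(ev d i j t * M) $$ (k, l) = M $$ (k, l) + (if k = i then t * M $$ (j, l) else 0)"
proof -
  have "(ev d i j t * M) $$ (k, l) = (\<Sum>m<d. ev d i j t $$ (k, m) * M $$ (m, l))"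
    using M k l by (simp add: scalar_prod_def lessThan_atLeast0 row_def col_def)
  also have "\<dots> = (\<Sum>m<d. (if k = m then M $$ (m, l) else 0) + (if k = i \<and> m = j then t * M $$ (m, l) else 0))"
    using k by (intro sum.cong) (auto simp: ring_distribs)
  also have "\<dots> = M $$ (k, l) + (if k = i then t * M $$ (j, l) else 0)"
    using k j by (simp add: sum.distrib)
  finally show ?thesis .
qed

lemma ev_mult_right:
  assumes M: "M \<in> carrier_mat n d" and k: "k < n" and l: "l < d" and i: "i < d"
  shows "(M * ev d i j t) $$ (k, l) = M $$ (k, l) + (if l = j then t * M $$ (k, i) else 0)"
proof -
  have "(M * ev d i j t) $$ (k, l) = (\<Sum>m<d. M $$ (k, m) * ev d i j t $$ (m, l))"
    using M k l by (simp add: scalar_prod_def lessThan_atLeast0 row_def col_def)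
  also have "\<dots> = (\<Sum>m<d. (if m = l then M $$ (k, m) else 0) + (if m = i \<and> l = j then t * M $$ (k, m) else 0))"
    using l by (intro sum.cong) (auto simp: ring_distribs)
  also have "\<dots> = M $$ (k, l) + (if l = j then t * M $$ (k, i) else 0)"
    using l i by (simp add: sum.distrib)
  finally show ?thesis .
qed

lemma cj_carrier[simp]: "M \<in> carrier_mat d d \<Longrightarrow> cj d i j t M \<in> carrier_mat d d"
  unfolding cj_def by (rule mult_carrier_mat[of _ d d _ d], rule mult_carrier_mat[of _ d d]) auto

lemma cj_index:
  assumes M: "M \<in> carrier_mat d d" and k: "k < d" and l: "l < d" and i: "i < d" and j: "j < d"
  shows "cj d i j t M $$ (k, l) = M $$ (k, l) + t * ((if k = i then M $$ (j, l) else 0)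
     - (if l = j then M $$ (k, i) else 0)) - t * t * (if k = i \<and> l = j then M $$ (j, i) else 0)"
proof -
  have EM: "ev d i j t * M \<in> carrier_mat d d" using M by (intro mult_carrier_mat[of _ d d]) auto
  have "cj d i j t M $$ (k, l) = (ev d i j t * M) $$ (k, l) + (if l = j then (- t) * (ev d i j t * M) $$ (k, i) else 0)"
    unfolding cj_def using ev_mult_right[OF EM k l i] .
  also have "\<dots> = M $$ (k, l) + (if k = i then t * M $$ (j, l) else 0)
      + (if l = j then (- t) * (M $$ (k, i) + (if k = i then t * M $$ (j, i) else 0)) else 0)"
    using ev_mult_left[OF M k _ j] k l i by simp
  also have "\<dots> = M $$ (k, l) + t * ((if k = i then M $$ (j, l) else 0)
     - (if l = j then M $$ (k, i) else 0)) - t * t * (if k = i \<and> l = j then M $$ (j, i) else 0)"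
    by (auto simp: algebra_simps)
  finally show ?thesis .
qed

lemma cj_dims[simp]: "dim_row (cj d i j t M) = d" "dim_col (cj d i j t M) = d"
  by (simp_all add: cj_def)

lemma cj_zero: "M \<in> carrier_mat d d \<Longrightarrow> i < d \<Longrightarrow> j < d \<Longrightarrow> cj d i j 0 M = M"
  by (rule eq_matI) (auto simp: cj_index)

lemma ev_inv: assumes "i \<noteq> j" "i < d" "j < d"
  shows "ev d i j t * ev d i j (- t) = 1\<^sub>m d"
proof (rule eq_matI)
  fix k l assume "k < dim_row (1\<^sub>m d)" "l < dim_col (1\<^sub>m d)"
  then show "(ev d i j t * ev d i j (- t)) $$ (k, l) = 1\<^sub>m d $$ (k, l)"
    using assms by (subst ev_mult_right[of _ d]) auto
qed auto

lemma minv_unique: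
  assumes "A \<in> carrier_mat d d" "B \<in> carrier_mat d d" "A * B = 1\<^sub>m d" "B * A = 1\<^sub>m d"
  shows "minv d A = B"
proof -
  have ex: "\<exists>B. B \<in> carrier_mat d d \<and> A * B = 1\<^sub>m d \<and> B * A = 1\<^sub>m d" using assms by blast
  define B' where "B' = minv d A"
  have B': "B' \<in> carrier_mat d d" "A * B' = 1\<^sub>m d" "B' * A = 1\<^sub>m d"
    using someI_ex[OF ex] unfolding B'_def minv_def by blast+
  have "B' = B' * (A * B)" using B'(1) assms(3) by simp
  also have "\<dots> = (B' * A) * B" using assms B' by (metis assoc_mult_mat)
  also have "\<dots> = B" using B'(3) assms(2) by simp
  finally show ?thesis unfolding B'_def .
qed

lemma ev_mult_ev: assumes "i \<noteq> j" "i < d" "j < d"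
  shows "ev d i j s * ev d i j t = ev d i j (s + t)"
proof (rule eq_matI)
  fix k l assume "k < dim_row (ev d i j (s + t))" "l < dim_col (ev d i j (s + t))"
  then show "(ev d i j s * ev d i j t) $$ (k, l) = ev d i j (s + t) $$ (k, l)"
    using assms by (subst ev_mult_right[of _ d]) (auto simp: algebra_simps)
qed auto

lemma ev_zero: "ev d i j 0 = 1\<^sub>m d"
  by (rule eq_matI) (auto simp: ev_def matunit_def)

lemma ev_pow: assumes "i \<noteq> j" "i < d" "j < d"
  shows "ev d i j s ^\<^sub>m n = ev d i j (s * int n)"
proof (induction n)
  case 0 then show ?case by (simp add: ev_zero)
next
  case (Suc n)
  then show ?case using ev_mult_ev[OF assms] by (simp add: algebra_simps)
qed

lemma elem_ev: "elem_mat d (i, j) = ev d i j 1"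
  by (rule eq_matI) (auto simp: elem_mat_def ev_def matunit_def)

lemma zpow_ev: assumes "i \<noteq> j" "i < d" "j < d"
  shows "zpow d (elem_mat d (i, j)) t = ev d i j t"
proof -
  have "minv d (ev d i j 1) = ev d i j (-1)"
    by (rule minv_unique) (auto simp: ev_mult_ev[OF assms] ev_zero)
  then show ?thesis
    using assms by (auto simp: zpow_def elem_ev ev_pow)
qed

definition valid_es :: "nat \<Rightarrow> (nat \<times> nat) list \<Rightarrow> bool" where
  "valid_es d es \<longleftrightarrow> es \<noteq> [] \<and> (\<forall>p\<in>set es. fst p < d \<and> snd p < d \<and> fst p \<noteq> snd p)"

lemma u_seq_ev: assumes "valid_es d es"
  shows "\<exists>i j. u_seq d es m = elem_mat d (i, j) \<and> i < d \<and> j < d \<and> i \<noteq> j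
     \<and> (i, j) = es ! ((m - 1) mod length es)"
proof -
  have "es ! ((m - 1) mod length es) \<in> set es" using assms by (auto simp: valid_es_def)
  then show ?thesis using assms unfolding valid_es_def u_seq_def
    by (metis prod.collapse)
qed

lemma wp_carrier: assumes "valid_es d es" shows "word_prod d es k n \<in> carrier_mat d d"
proof (induction n)
  case (Suc n)
  obtain i j where "u_seq d es (Suc n) = elem_mat d (i, j)" "i < d" "j < d" "i \<noteq> j"
    using u_seq_ev[OF assms] by blast
  then show ?case using Suc by (simp add: zpow_ev)
qed simp

lemma wp_agree: "(\<forall>m. m \<le> n \<longrightarrow> k' m = k m) \<Longrightarrow> word_prod d es k' n = word_prod d es k n"
  by (induction n) auto

lemma wp_extend:
  assumes v: "valid_es d es" and g: "word_prod d es k (q * length es) = g"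
    and idx: "idx < length es" and p: "es ! idx = (i, j)"
  shows "\<exists>k'. word_prod d es k' (q * length es + length es) = g * ev d i j t"
proof -
  define n where "n = q * length es"
  define l where "l = length es"
  define k' where "k' m = (if m \<le> n then k m else if m = n + idx + 1 then t else 0)" for m
  have ij: "i < d" "j < d" "i \<noteq> j" using v idx p nth_mem[OF idx] by (auto simp: valid_es_def)
  have gc: "g \<in> carrier_mat d d" using wp_carrier[OF v] g by metis
  have "m \<le> l \<Longrightarrow> word_prod d es k' (n + m) = (if idx < m then g * ev d i j t else g)" for m
  proof (induction m)
    case 0
    have "word_prod d es k' n = word_prod d es k n" by (rule wp_agree) (simp add: k'_def)
    then show ?case using g by (simp add: n_def)
  next
    case (Suc m)
    have ml: "m < l" using Suc by simp
    have "(n + m) mod l = m" using ml by (simp add: n_def l_def)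
    then have us: "u_seq d es (Suc (n + m)) = elem_mat d (es ! m)"
      by (simp add: u_seq_def l_def)
    have em: "es ! m \<in> set es" using ml by (simp add: l_def)
    obtain a b where ab: "es ! m = (a, b)" by fastforce
    have abv: "a < d" "b < d" "a \<noteq> b" using v em ab by (auto simp: valid_es_def)
    have kk: "k' (Suc (n + m)) = (if m = idx then t else 0)" by (simp add: k'_def)
    have IH: "word_prod d es k' (n + m) = (if idx < m then g * ev d i j t else g)"
      using Suc by simp
    show ?case
    proof (cases "m = idx")
      case True
      then show ?thesis using IH us kk p ab abv by (simp add: zpow_ev)
    next
      case False
      have c1: "word_prod d es k' (n + m) \<in> carrier_mat d d" using wp_carrier[OF v] .
      have "word_prod d es k' (n + Suc m) = word_prod d es k' (n + m) * ev d a b 0"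
        using us kk False ab abv by (simp add: zpow_ev)
      also have "\<dots> = word_prod d es k' (n + m)" using c1 by (simp add: ev_zero)
      finally show ?thesis using IH False by auto
    qed
  qed
  from this[of l] idx show ?thesis by (auto simp: n_def l_def)
qed

lemma assoc4:
  assumes "g \<in> carrier_mat d d" "f \<in> carrier_mat d d" "M \<in> carrier_mat d d"
    "f' \<in> carrier_mat d d" "h \<in> carrier_mat d d"
  shows "(g * f) * M * (f' * h) = g * (f * M * f') * h"
proof -
  have "(g * f) * M * (f' * h) = g * (f * M) * (f' * h)"
    using assms by (simp add: assoc_mult_mat[of g d d f d M d])
  also have "\<dots> = (g * (f * M) * f') * h"
    using assms by (subst assoc_mult_mat[of _ d d f' d h d, symmetric]) (auto intro: mult_carrier_mat)
  also have "g * (f * M) * f' = g * (f * M * f')"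
    using assms by (subst assoc_mult_mat[of g d d _ d f' d]) (auto intro: mult_carrier_mat)
  finally show ?thesis .
qed

definition good :: "nat \<Rightarrow> (nat \<times> nat) list \<Rightarrow> nat \<Rightarrow> (int mat \<Rightarrow> int mat) \<Rightarrow> bool" where
  "good d es n F \<longleftrightarrow> (\<exists>k h. h \<in> carrier_mat d d \<and> word_prod d es k n * h = 1\<^sub>m d
     \<and> h * word_prod d es k n = 1\<^sub>m d \<and> (\<forall>M\<in>carrier_mat d d. word_prod d es k n * M * h = F M))"

lemma good_0: "good d es 0 (\<lambda>M. M)"
  unfolding good_def by (rule exI[of _ "\<lambda>_. 0"], rule exI[of _ "1\<^sub>m d"]) auto

lemma good_step:
  assumes v: "valid_es d es" and gd: "good d es (q * length es) F" and p: "(i, j) \<in> set es"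
  shows "good d es (q * length es + length es) (\<lambda>M. F (cj d i j t M))"
proof -
  obtain k h where h: "h \<in> carrier_mat d d" "word_prod d es k (q * length es) * h = 1\<^sub>m d"
     "h * word_prod d es k (q * length es) = 1\<^sub>m d"
     "\<forall>M\<in>carrier_mat d d. word_prod d es k (q * length es) * M * h = F M"
    using gd unfolding good_def by blast
  define g where "g = word_prod d es k (q * length es)"
  have gc: "g \<in> carrier_mat d d" using wp_carrier[OF v] unfolding g_def .
  obtain idx where idx: "idx < length es" "es ! idx = (i, j)" using p by (metis in_set_conv_nth)
  have ij: "i < d" "j < d" "i \<noteq> j" using v p by (auto simp: valid_es_def)
  obtain k' where k': "word_prod d es k' (q * length es + length es) = g * ev d i j t"
    using wp_extend[OF v g_def[symmetric] idx] by blast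
  let ?f = "ev d i j t" and ?f' = "ev d i j (- t)"
  have ff: "?f * ?f' = 1\<^sub>m d" "?f' * ?f = 1\<^sub>m d"
    using ev_mult_ev[OF ij(3,1,2)] by (auto simp: ev_zero)
  have hc: "?f' * h \<in> carrier_mat d d" using h by (intro mult_carrier_mat) auto
  have 1: "(g * ?f) * (?f' * h) = 1\<^sub>m d"
    using assoc4[OF gc _ one_carrier_mat _ h(1), of ?f ?f'] ff h(2) gc h(1) by (simp add: g_def)
  have fc: "?f \<in> carrier_mat d d" "?f' \<in> carrier_mat d d" by auto
  have "(?f' * h) * (g * ?f) = ?f' * (h * (g * ?f))"
    using fc h(1) gc by (intro assoc_mult_mat) (auto intro: mult_carrier_mat)
  also have "h * (g * ?f) = (h * g) * ?f"
    using fc h(1) gc by (intro assoc_mult_mat[symmetric]) (auto intro: mult_carrier_mat)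
  finally have 2: "(?f' * h) * (g * ?f) = 1\<^sub>m d"
    using h(3) ff fc by (simp add: g_def)
  have 3: "\<forall>M\<in>carrier_mat d d. (g * ?f) * M * (?f' * h) = F (cj d i j t M)"
  proof
    fix M :: "int mat" assume M: "M \<in> carrier_mat d d"
    have "(g * ?f) * M * (?f' * h) = g * cj d i j t M * h"
      unfolding cj_def by (rule assoc4[OF gc fc(1) M fc(2) h(1)])
    also have "\<dots> = F (cj d i j t M)" using h(4) M unfolding g_def by simp
    finally show "(g * ?f) * M * (?f' * h) = F (cj d i j t M)" .
  qed
  show ?thesis unfolding good_def
    by (rule exI[of _ k'], rule exI[of _ "?f' * h"]) (use k' hc 1 2 3 in auto)
qed

lemma good_orbit:
  assumes v: "valid_es d es" and gd: "good d es n F" and c: "c \<in> carrier_mat d d"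
  shows "F c \<in> orbit d es n c"
proof -
  obtain k h where h: "h \<in> carrier_mat d d" "word_prod d es k n * h = 1\<^sub>m d"
     "h * word_prod d es k n = 1\<^sub>m d"
     "\<forall>M\<in>carrier_mat d d. word_prod d es k n * M * h = F M"
    using gd unfolding good_def by blast
  have "minv d (word_prod d es k n) = h"
    by (rule minv_unique) (use h wp_carrier[OF v] in auto)
  then have "F c = word_prod d es k n * c * minv d (word_prod d es k n)" using h(4) c by auto
  then show ?thesis unfolding orbit_def Gamma_def by blast
qed

definition Bm :: "nat \<Rightarrow> nat \<Rightarrow> nat \<Rightarrow> 'a::comm_ring_1 mat" where
  "Bm d k l = mat d d (\<lambda>(a, b). if a = k \<and> b = l then 1
      else if k = l \<and> a = d - 1 \<and> b = d - 1 then -1 else 0)"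

lemma Bm_carrier[simp]: "Bm d k l \<in> carrier_mat d d"
  by (simp add: Bm_def)

lemma Bm_dims[simp]: "dim_row (Bm d k l) = d" "dim_col (Bm d k l) = d"
  by (simp_all add: Bm_def)

lemma Bm_index[simp]: "a < d \<Longrightarrow> b < d \<Longrightarrow> Bm d k l $$ (a, b) =
   (if a = k \<and> b = l then 1 else if k = l \<and> a = d - 1 \<and> b = d - 1 then -1 else 0)"
  by (simp add: Bm_def)

lemma trace_Bm: assumes "k < d" "l < d" "(k, l) \<noteq> (d - 1, d - 1)"
  shows "(\<Sum>i<d. (Bm d k l :: 'a::comm_ring_1 mat) $$ (i, i)) = 0"
proof (cases "k = l")
  case True
  have "(\<Sum>i<d. (Bm d k l :: 'a mat) $$ (i, i)) = (\<Sum>i<d. (if i = k then 1 else 0) - (if i = d - 1 then 1 else 0))"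
    using assms True by (intro sum.cong) auto
  also have "\<dots> = 0" using assms by (simp add: sum_subtractf)
  finally show ?thesis .
next
  case False
  then show ?thesis by (intro sum.neutral) auto
qed

lemma decomp:
  fixes W :: "'a::comm_ring_1 mat set"
  assumes z: "0\<^sub>m d d \<in> W" and add: "\<And>x y. x \<in> W \<Longrightarrow> y \<in> W \<Longrightarrow> x + y \<in> W"
    and X: "X \<in> carrier_mat d d" "(\<Sum>i<d. X $$ (i, i)) = 0" and d: "d \<ge> 1"
    and gen: "\<And>k l. k < d \<Longrightarrow> l < d \<Longrightarrow> (k, l) \<noteq> (d - 1, d - 1) \<Longrightarrow> X $$ (k, l) \<cdot>\<^sub>m Bm d k l \<in> W"
  shows "X \<in> W"
proof -
  let ?G = "\<lambda>X::'a mat. \<forall>k l. k < d \<longrightarrow> l < d \<longrightarrow> (k, l) \<noteq> (d - 1, d - 1) \<longrightarrow> X $$ (k, l) \<cdot>\<^sub>m Bm d k l \<in> W"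
  have main: "\<And>X. X \<in> carrier_mat d d \<Longrightarrow> (\<Sum>i<d. X $$ (i, i)) = 0 \<Longrightarrow> ?G X \<Longrightarrow>
     (\<forall>k l. k < d \<longrightarrow> l < d \<longrightarrow> (k, l) \<notin> F \<longrightarrow> (k, l) \<noteq> (d - 1, d - 1) \<longrightarrow> X $$ (k, l) = 0)
     \<Longrightarrow> X \<in> W" if "finite F" for F
    using that
  proof (induction F rule: finite_induct)
    case empty
    fix X :: "'a mat"
    assume Xc: "X \<in> carrier_mat d d" and tr: "(\<Sum>i<d. X $$ (i, i)) = 0"
      and zr: "\<forall>k l. k < d \<longrightarrow> l < d \<longrightarrow> (k, l) \<notin> {} \<longrightarrow> (k, l) \<noteq> (d - 1, d - 1) \<longrightarrow> X $$ (k, l) = 0"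
    have "(\<Sum>i<d. X $$ (i, i)) = X $$ (d - 1, d - 1)"
      using zr d by (subst sum.remove[of _ "d - 1"]) (auto intro!: sum.neutral)
    then have "X $$ (d - 1, d - 1) = 0" using tr by simp
    then have "X = 0\<^sub>m d d" using zr Xc by (intro eq_matI) auto
    then show "X \<in> W" using z by simp
  next
    case (insert x F)
    fix X :: "'a mat"
    assume Xc: "X \<in> carrier_mat d d" and tr: "(\<Sum>i<d. X $$ (i, i)) = 0" and gX: "?G X"
      and zr: "\<forall>k l. k < d \<longrightarrow> l < d \<longrightarrow> (k, l) \<notin> insert x F \<longrightarrow> (k, l) \<noteq> (d - 1, d - 1) \<longrightarrow> X $$ (k, l) = 0"
    obtain k l where x: "x = (k, l)" by fastforce
    show "X \<in> W"
    proof (cases "k < d \<and> l < d \<and> (k, l) \<noteq> (d - 1, d - 1)")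
      case False
      then show ?thesis using insert.IH[OF Xc tr gX] zr x by auto
    next
      case True
      define X' where "X' = X + (- X $$ (k, l)) \<cdot>\<^sub>m Bm d k l"
      have X'c: "X' \<in> carrier_mat d d" using Xc by (simp add: X'_def)
      have X'i: "a < d \<Longrightarrow> b < d \<Longrightarrow> X' $$ (a, b) = X $$ (a, b) - X $$ (k, l) * Bm d k l $$ (a, b)" for a b
        using Xc by (simp add: X'_def del: Bm_index)
      have tr': "(\<Sum>i<d. X' $$ (i, i)) = 0"
      proof -
        have "(\<Sum>i<d. X' $$ (i, i)) = (\<Sum>i<d. X $$ (i, i)) - X $$ (k, l) * (\<Sum>i<d. (Bm d k l :: 'a mat) $$ (i, i))"
          by (simp add: X'i sum_subtractf sum_distrib_left del: Bm_index)
        moreover have "(\<Sum>i<d. (Bm d k l :: 'a mat) $$ (i, i)) = 0"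
          by (rule trace_Bm) (use True in auto)
        ultimately show ?thesis using tr by (simp del: Bm_index)
      qed
      have same: "a < d \<Longrightarrow> b < d \<Longrightarrow> (a, b) \<noteq> (k, l) \<Longrightarrow> (a, b) \<noteq> (d - 1, d - 1) \<Longrightarrow> X' $$ (a, b) = X $$ (a, b)" for a b
        by (auto simp: X'i)
      have kl0: "X' $$ (k, l) = 0" using True by (simp add: X'i)
      have gX': "?G X'"
      proof (intro allI impI)
        fix a b assume ab: "a < d" "b < d" "(a, b) \<noteq> (d - 1, d - 1)"
        show "X' $$ (a, b) \<cdot>\<^sub>m Bm d a b \<in> W"
        proof (cases "(a, b) = (k, l)")
          case True
          have "X' $$ (a, b) \<cdot>\<^sub>m Bm d a b = 0\<^sub>m d d" using True kl0 by (intro eq_matI) auto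
          then show ?thesis using z by simp
        next
          case False
          then show ?thesis using same[OF ab(1,2) False ab(3)] gX ab by simp
        qed
      qed
      have zr': "\<forall>a b. a < d \<longrightarrow> b < d \<longrightarrow> (a, b) \<notin> F \<longrightarrow> (a, b) \<noteq> (d - 1, d - 1) \<longrightarrow> X' $$ (a, b) = 0"
        using zr same kl0 x by (metis insertE)
      have X'W: "X' \<in> W" using insert.IH[OF X'c tr' gX' zr'] .
      have "X = X' + X $$ (k, l) \<cdot>\<^sub>m Bm d k l"
        using Xc by (intro eq_matI) (auto simp: X'i)
      then show ?thesis using add[OF X'W] gX True by metis
    qed
  qed
  show ?thesis
    by (rule main[of "{..<d} \<times> {..<d}"]) (use X gen in auto)
qed

lemma orbit4:
  assumes v: "valid_es d es" and c: "c \<in> carrier_mat d d"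
    and p: "(i1, j1) \<in> set es" "(i2, j2) \<in> set es" "(i3, j3) \<in> set es" "(i4, j4) \<in> set es"
  shows "cj d i1 j1 t1 (cj d i2 j2 t2 (cj d i3 j3 t3 (cj d i4 j4 t4 c))) \<in> orbit d es (4 * length es) c"
proof -
  have g0: "good d es (0 * length es) (\<lambda>M. M)" using good_0 by simp
  have g1: "good d es (1 * length es) (\<lambda>M. cj d i1 j1 t1 M)"
    using good_step[OF v g0 p(1)] by simp
  have e2: "1 * length es + length es = 2 * length es"
    and e3: "2 * length es + length es = 3 * length es"
    and e4: "3 * length es + length es = 4 * length es" by simp_all
  have g2: "good d es (2 * length es) (\<lambda>M. cj d i1 j1 t1 (cj d i2 j2 t2 M))"
    using good_step[OF v g1 p(2), of t2] unfolding e2 .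
  have g3: "good d es (3 * length es) (\<lambda>M. cj d i1 j1 t1 (cj d i2 j2 t2 (cj d i3 j3 t3 M)))"
    using good_step[OF v g2 p(3), of t3] unfolding e3 .
  have g4: "good d es (4 * length es) (\<lambda>M. cj d i1 j1 t1 (cj d i2 j2 t2 (cj d i3 j3 t3 (cj d i4 j4 t4 M))))"
    using good_step[OF v g3 p(4), of t4] unfolding e4 .
  show ?thesis using good_orbit[OF v g4 c] by simp
qed

lemma companion_carrier[simp]: "companion d p \<in> carrier_mat d d"
  by (simp add: companion_def)

lemma companion_index[simp]: "k < d \<Longrightarrow> l < d \<Longrightarrow> companion d p $$ (k, l) =
   (if k = l + 1 then 1 else if l = d - 1 then - coeff p k else 0)"
  by (simp add: companion_def)

lemma hit:
  fixes p :: "int poly"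
  assumes d: "d \<ge> 2" and ij: "i < d" "j < d" "i \<noteq> j"
  defines "c \<equiv> companion d p"
  shows "\<exists>a1 b1 s1 a2 b2 s2 a3 b3 s3. a1 < d \<and> b1 < d \<and> a1 \<noteq> b1 \<and> a2 < d \<and> b2 < d \<and> a2 \<noteq> b2
     \<and> a3 < d \<and> b3 < d \<and> a3 \<noteq> b3 \<and>
     (cj d a1 b1 s1 (cj d a2 b2 s2 (cj d a3 b3 s3 c)) $$ (j, i) = 1 \<or>
      cj d a1 b1 s1 (cj d a2 b2 s2 (cj d a3 b3 s3 c)) $$ (j, i) = -1)"
proof -
  have cc: "c \<in> carrier_mat d d" by (simp add: c_def)
  have z: "cj d 0 1 0 M = M" if "M \<in> carrier_mat d d" for M using cj_zero[OF that] d by simp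
  have 01: "(0::nat) < d" "(1::nat) < d" "(0::nat) \<noteq> 1" using d by auto
  show ?thesis
  proof (cases "i < d - 1")
    case True
    show ?thesis
    proof (cases "j = i + 1")
      case True
      have "cj d 0 1 0 (cj d 0 1 0 (cj d 0 1 0 c)) $$ (j, i) = 1"
        using True ij cc d by (simp add: cj_zero c_def)
      then show ?thesis using 01 by blast
    next
      case False
      have "cj d j (i + 1) 1 (cj d 0 1 0 (cj d 0 1 0 c)) $$ (j, i) = 1"
        using True False ij cc d by (simp add: cj_zero c_def cj_index)
      then show ?thesis using 01 ij True False by (metis add_lessD1 less_diff_conv)
    qed
  next
    case False
    then have i: "i = d - 1" using ij by simp
    show ?thesis
    proof (cases "j \<ge> 1")
      case True
      have "cj d (j - 1) (d - 1) (-1) (cj d (d - 1) (j - 1) 1 (cj d 0 1 0 c)) $$ (j, i) = 1"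
        using True i ij cc d by (simp add: cj_zero c_def cj_index)
      moreover have "j - 1 < d" "d - 1 < d" "j - 1 \<noteq> d - 1" "d - 1 \<noteq> j - 1" using True ij i d by auto
      ultimately show ?thesis using 01 by blast
    next
      case False
      then have j: "j = 0" by simp
      show ?thesis
      proof (cases "d = 2")
        case True
        have "cj d 0 1 1 (cj d 1 0 (-1) (cj d 0 1 0 c)) $$ (j, i) = 1 \<or>
              cj d 0 1 1 (cj d 1 0 (-1) (cj d 0 1 0 c)) $$ (j, i) = -1"
          using True i j cc d by (simp add: cj_zero c_def cj_index)
        then show ?thesis using 01 by blast
      next
        case False
        have "cj d 0 1 1 (cj d 0 (d - 1) 1 (cj d (d - 1) 0 (-1) c)) $$ (j, i) = 1 \<or>
              cj d 0 1 1 (cj d 0 (d - 1) 1 (cj d (d - 1) 0 (-1) c)) $$ (j, i) = -1"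
        proof -
          have "Suc 0 \<noteq> d - Suc 0" "d \<ge> 3" using False d by auto
          then show ?thesis using d i j cc by (simp add: c_def cj_index)
        qed
        moreover have "0 < d" "d - 1 < d" "(0::nat) \<noteq> d - 1" "d - 1 \<noteq> 0" using d by auto
        ultimately show ?thesis using 01 by blast
      qed
    qed
  qed
qed

lemma int_mult_W:
  fixes W :: "int mat set"
  assumes z: "0\<^sub>m d d \<in> W" and add: "\<And>x y. x \<in> W \<Longrightarrow> y \<in> W \<Longrightarrow> x + y \<in> W"
    and neg: "\<And>x. x \<in> W \<Longrightarrow> - x \<in> W" and Y: "Y \<in> W" "Y \<in> carrier_mat d d"
  shows "x \<cdot>\<^sub>m Y \<in> W"
proof -
  have nat: "int n \<cdot>\<^sub>m Y \<in> W" for n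
  proof (induction n)
    case 0
    have "int 0 \<cdot>\<^sub>m Y = 0\<^sub>m d d" using Y by (intro eq_matI) auto
    then show ?case using z by simp
  next
    case (Suc n)
    have "int (Suc n) \<cdot>\<^sub>m Y = Y + int n \<cdot>\<^sub>m Y" using Y by (intro eq_matI) (auto simp: algebra_simps)
    then show ?case using add[OF Y(1) Suc] by simp
  qed
  show ?thesis
  proof (cases "x \<ge> 0")
    case True
    then show ?thesis using nat[of "nat x"] by simp
  next
    case False
    have "x \<cdot>\<^sub>m Y = - (int (nat (- x)) \<cdot>\<^sub>m Y)" using Y False by (intro eq_matI) auto
    moreover have "- (int (nat (- x)) \<cdot>\<^sub>m Y) \<in> W" using neg[OF nat] .
    ultimately show ?thesis by simp
  qed
qed

lemma pair_core:
  fixes W :: "int mat set"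
  assumes add: "\<And>x y. x \<in> W \<Longrightarrow> y \<in> W \<Longrightarrow> x + y \<in> W"
    and neg: "\<And>x. x \<in> W \<Longrightarrow> - x \<in> W" and C: "C \<in> carrier_mat d d"
    and ij: "i < d" "j < d" "i \<noteq> j"
    and Y1: "cj d i j 1 C - C \<in> W" and Y2: "cj d i j (-1) C - C \<in> W"
  shows "(- 2 * C $$ (j, i)) \<cdot>\<^sub>m Bm d i j \<in> W"
    and "2 \<cdot>\<^sub>m mat d d (\<lambda>(k, l). (if k = i then C $$ (j, l) else 0) - (if l = j then C $$ (k, i) else 0)) \<in> W"
proof -
  have "(- 2 * C $$ (j, i)) \<cdot>\<^sub>m Bm d i j = (cj d i j 1 C - C) + (cj d i j (-1) C - C)"
    using C ij by (intro eq_matI) (auto simp: cj_index)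
  then show "(- 2 * C $$ (j, i)) \<cdot>\<^sub>m Bm d i j \<in> W" using add[OF Y1 Y2] by simp
  have "2 \<cdot>\<^sub>m mat d d (\<lambda>(k, l). (if k = i then C $$ (j, l) else 0) - (if l = j then C $$ (k, i) else 0))
     = (cj d i j 1 C - C) + - (cj d i j (-1) C - C)"
    using C ij by (intro eq_matI) (auto simp: cj_index)
  then show "2 \<cdot>\<^sub>m mat d d (\<lambda>(k, l). (if k = i then C $$ (j, l) else 0) - (if l = j then C $$ (k, i) else 0)) \<in> W"
    using add[OF Y1 neg[OF Y2]] by simp
qed

lemma core:
  fixes W :: "int mat set" and p :: "int poly"
  assumes d: "d \<ge> 2" and v: "valid_es d es"
    and alles: "\<And>a b. a < d \<Longrightarrow> b < d \<Longrightarrow> a \<noteq> b \<Longrightarrow> (a, b) \<in> set es"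
    and z: "0\<^sub>m d d \<in> W" and add: "\<And>x y. x \<in> W \<Longrightarrow> y \<in> W \<Longrightarrow> x + y \<in> W"
    and neg: "\<And>x. x \<in> W \<Longrightarrow> - x \<in> W"
    and diff: "\<And>s s'. s \<in> orbit d es (4 * length es) (companion d p) \<Longrightarrow>
                s' \<in> orbit d es (4 * length es) (companion d p) \<Longrightarrow> s - s' \<in> W"
    and X: "X \<in> carrier_mat d d" "(\<Sum>i<d. X $$ (i, i)) = 0"
  shows "2 \<cdot>\<^sub>m X \<in> W"
proof -
  let ?c = "companion d p"
  let ?S = "orbit d es (4 * length es) ?c"
  have step: "\<exists>C. C \<in> carrier_mat d d \<and> (C $$ (j, i) = 1 \<or> C $$ (j, i) = -1)
      \<and> cj d i j 1 C - C \<in> W \<and> cj d i j (-1) C - C \<in> W" if ij: "i < d" "j < d" "i \<noteq> j" for i j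
  proof -
    obtain a1 b1 s1 a2 b2 s2 a3 b3 s3 where h: "a1 < d" "b1 < d" "a1 \<noteq> b1" "a2 < d" "b2 < d" "a2 \<noteq> b2"
      "a3 < d" "b3 < d" "a3 \<noteq> b3"
      "cj d a1 b1 s1 (cj d a2 b2 s2 (cj d a3 b3 s3 ?c)) $$ (j, i) = 1 \<or>
       cj d a1 b1 s1 (cj d a2 b2 s2 (cj d a3 b3 s3 ?c)) $$ (j, i) = -1"
      using hit[OF d ij, of p] by blast
    define C where "C = cj d a1 b1 s1 (cj d a2 b2 s2 (cj d a3 b3 s3 ?c))"
    have Cc: "C \<in> carrier_mat d d" by (simp add: C_def)
    have mem: "cj d i j t C \<in> ?S" for t
      unfolding C_def by (rule orbit4[OF v companion_carrier]) (use alles ij h in auto)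
    have "C \<in> ?S" using mem[of 0] cj_zero[OF Cc ij(1,2)] by simp
    then show ?thesis using diff[OF mem[of 1]] diff[OF mem[of "-1"]] Cc h(10) unfolding C_def by blast
  qed
  have off: "2 \<cdot>\<^sub>m Bm d i j \<in> W" if ij: "i < d" "j < d" "i \<noteq> j" for i j
  proof -
    obtain C where C: "C \<in> carrier_mat d d" "C $$ (j, i) = 1 \<or> C $$ (j, i) = -1"
      "cj d i j 1 C - C \<in> W" "cj d i j (-1) C - C \<in> W" using step[OF ij] by blast
    have m: "(- 2 * C $$ (j, i)) \<cdot>\<^sub>m Bm d i j \<in> W" by (rule pair_core(1)[OF add neg C(1) ij C(3,4)])
    show ?thesis
    proof (cases "C $$ (j, i) = 1")
      case True
      have "2 \<cdot>\<^sub>m Bm d i j = - ((- 2 * C $$ (j, i)) \<cdot>\<^sub>m Bm d i j)"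
        using True by (intro eq_matI) auto
      then show ?thesis using neg[OF m] by simp
    next
      case False
      then show ?thesis using m C(2) by simp
    qed
  qed
  define W' where "W' = {X. X \<in> carrier_mat d d \<and> 2 \<cdot>\<^sub>m X \<in> W}"
  have z': "0\<^sub>m d d \<in> W'" using z by (simp add: W'_def)
  have add': "x + y \<in> W'" if "x \<in> W'" "y \<in> W'" for x y
  proof -
    have "2 \<cdot>\<^sub>m (x + y) = 2 \<cdot>\<^sub>m x + 2 \<cdot>\<^sub>m y" using that
      by (intro eq_matI) (auto simp: W'_def algebra_simps)
    then show ?thesis using that add by (auto simp: W'_def)
  qed
  have mult': "x \<cdot>\<^sub>m Bm d k l \<in> W'" if "2 \<cdot>\<^sub>m Bm d k l \<in> W" for x k l
  proof -
    have "2 \<cdot>\<^sub>m (x \<cdot>\<^sub>m Bm d k l) = x \<cdot>\<^sub>m (2 \<cdot>\<^sub>m Bm d k l)"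
      by (intro eq_matI) (auto simp del: Bm_index)
    then show ?thesis using int_mult_W[OF z add neg that, of x] by (auto simp: W'_def)
  qed
  have zero': "0 \<cdot>\<^sub>m Bm d k l \<in> W'" for k l
  proof -
    have "(0::int) \<cdot>\<^sub>m Bm d k l = 0\<^sub>m d d" by (intro eq_matI) (auto simp del: Bm_index)
    then show ?thesis using z' by simp
  qed
  have diag: "2 \<cdot>\<^sub>m Bm d i i \<in> W" if i: "i < d - 1" for i
  proof -
    have ij: "i < d" "d - 1 < d" "i \<noteq> d - 1" using i d by auto
    obtain C where C: "C \<in> carrier_mat d d" "C $$ (d - 1, i) = 1 \<or> C $$ (d - 1, i) = -1"
      "cj d i (d - 1) 1 C - C \<in> W" "cj d i (d - 1) (-1) C - C \<in> W" using step[OF ij] by blast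
    define Z where "Z = mat d d (\<lambda>(k, l). (if k = i then C $$ (d - 1, l) else 0) - (if l = d - 1 then C $$ (k, i) else 0))"
    have Zc: "Z \<in> carrier_mat d d" by (simp add: Z_def)
    have ZW: "2 \<cdot>\<^sub>m Z \<in> W" unfolding Z_def by (rule pair_core(2)[OF add neg C(1) ij C(3,4)])
    define Z0 where "Z0 = Z + (- C $$ (d - 1, i)) \<cdot>\<^sub>m Bm d i i"
    have Z0c: "Z0 \<in> carrier_mat d d" using Zc by (simp add: Z0_def)
    have Z0d: "Z0 $$ (k, k) = 0" if "k < d" for k
      using that ij Zc by (auto simp: Z0_def Z_def)
    have Z0W: "Z0 \<in> W'"
    proof (rule decomp[OF z' add' Z0c])
      show "(\<Sum>k<d. Z0 $$ (k, k)) = 0" using Z0d by simp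
      show "1 \<le> d" using d by simp
      fix k l assume kl: "k < d" "l < d" "(k, l) \<noteq> (d - 1, d - 1)"
      show "Z0 $$ (k, l) \<cdot>\<^sub>m Bm d k l \<in> W'"
      proof (cases "k = l")
        case True then show ?thesis using Z0d kl zero' by simp
      next
        case False then show ?thesis using off kl mult' by simp
      qed
    qed
    have "C $$ (d - 1, i) \<cdot>\<^sub>m (2 \<cdot>\<^sub>m Bm d i i) = 2 \<cdot>\<^sub>m Z + - (2 \<cdot>\<^sub>m Z0)"
      using Zc by (intro eq_matI) (auto simp: Z0_def simp del: Bm_index)
    then have m: "C $$ (d - 1, i) \<cdot>\<^sub>m (2 \<cdot>\<^sub>m Bm d i i) \<in> W"
      using add[OF ZW neg] Z0W by (auto simp: W'_def)
    show ?thesis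
    proof (cases "C $$ (d - 1, i) = 1")
      case True
      have "(1::int) \<cdot>\<^sub>m (2 \<cdot>\<^sub>m Bm d i i) = 2 \<cdot>\<^sub>m Bm d i i" by (intro eq_matI) auto
      then show ?thesis using m True by simp
    next
      case False
      then have "2 \<cdot>\<^sub>m Bm d i i = - (C $$ (d - 1, i) \<cdot>\<^sub>m (2 \<cdot>\<^sub>m Bm d i i))"
        using C(2) by (intro eq_matI) auto
      then show ?thesis using neg[OF m] by simp
    qed
  qed
  have "X \<in> W'"
  proof (rule decomp[OF z' add' X])
    show "1 \<le> d" using d by simp
    fix k l assume kl: "k < d" "l < d" "(k, l) \<noteq> (d - 1, d - 1)"
    show "X $$ (k, l) \<cdot>\<^sub>m Bm d k l \<in> W'"
    proof (cases "k = l")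
      case True
      then have "k < d - 1" using kl by auto
      then show ?thesis using diag mult' True by simp
    next
      case False then show ?thesis using off kl mult' by simp
    qed
  qed
  then show ?thesis by (simp add: W'_def)
qed

lemma card_T:
  "finite {M :: int mat. M \<in> carrier_mat d d \<and> (\<forall>i<d. \<forall>j<d. M $$ (i, j) \<in> {0, 1})}
   \<and> card {M :: int mat. M \<in> carrier_mat d d \<and> (\<forall>i<d. \<forall>j<d. M $$ (i, j) \<in> {0, 1})} \<le> 2 ^ (d * d)"
proof -
  let ?T = "{M :: int mat. M \<in> carrier_mat d d \<and> (\<forall>i<d. \<forall>j<d. M $$ (i, j) \<in> {0, 1})}"
  let ?P = "PiE ({..<d} \<times> {..<d}) (\<lambda>_. {0::int, 1})"
  let ?f = "\<lambda>M::int mat. restrict (\<lambda>(i, j). M $$ (i, j)) ({..<d} \<times> {..<d})"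
  have inj: "inj_on ?f ?T"
  proof (rule inj_onI)
    fix M M' assume M: "M \<in> ?T" "M' \<in> ?T" "?f M = ?f M'"
    show "M = M'"
    proof (rule eq_matI)
      fix i j assume ij: "i < dim_row M'" "j < dim_col M'"
      then have "?f M (i, j) = ?f M' (i, j)" using M by simp
      then show "M $$ (i, j) = M' $$ (i, j)" using ij M by auto
    qed (use M in auto)
  qed
  have sub: "?f ` ?T \<subseteq> ?P"
  proof (rule image_subsetI)
    fix M assume M: "M \<in> ?T"
    show "?f M \<in> ?P" unfolding restrict_PiE_iff
    proof
      fix x assume "x \<in> {..<d} \<times> {..<d}"
      then obtain i j where "x = (i, j)" "i < d" "j < d" by blast
      then show "(\<lambda>(i, j). M $$ (i, j)) x \<in> {0, 1}" using M by simp
    qed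
  qed
  have fin: "finite ?P" by (intro finite_PiE) auto
  have c2: "card {0::int, 1} = 2" by simp
  have cP: "card ?P = 2 ^ (d * d)"
    by (simp only: card_PiE[OF finite_cartesian_product[OF finite_lessThan finite_lessThan]]
        prod_constant c2 card_cartesian_product card_lessThan)
  have fT: "finite ?T" using finite_imageD[OF finite_subset[OF sub fin] inj] .
  have "card ?T \<le> card ?P" using card_inj_on_le[OF inj sub fin] .
  then show ?thesis using fT cP by simp
qed






lemma coset_part:
  fixes W :: "int mat set"
  assumes sg: "sl_subgroup d W" and two: "\<And>X. X \<in> sl d \<Longrightarrow> 2 \<cdot>\<^sub>m X \<in> W"
  shows "finite (sl_cosets d W) \<and> card (sl_cosets d W) \<le> 2 ^ (d * d)"
proof -
  have Wsl: "W \<subseteq> sl d" and add: "\<And>x y. x \<in> W \<Longrightarrow> y \<in> W \<Longrightarrow> x + y \<in> W"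
    using sg unfolding sl_subgroup_def by auto
  let ?r = "\<lambda>a::int mat. map_mat (\<lambda>x. x mod 2) a"
  let ?T = "{M :: int mat. M \<in> carrier_mat d d \<and> (\<forall>i<d. \<forall>j<d. M $$ (i, j) \<in> {0, 1})}"
  have one_dir: "(+) a ` W \<subseteq> (+) a' ` W" if a: "a \<in> sl d" "a' \<in> sl d" "?r a = ?r a'" for a a'
  proof -
    have ac: "a \<in> carrier_mat d d" "a' \<in> carrier_mat d d" using a by (auto simp: sl_def)
    define Y where "Y = mat d d (\<lambda>(k, l). (a $$ (k, l) - a' $$ (k, l)) div 2)"
    have ev2: "2 * Y $$ (k, l) = a $$ (k, l) - a' $$ (k, l)" if "k < d" "l < d" for k l
    proof -
      have "?r a $$ (k, l) = ?r a' $$ (k, l)" using a by simp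
      then have "a $$ (k, l) mod 2 = a' $$ (k, l) mod 2" using that ac by simp
      then have "2 dvd (a $$ (k, l) - a' $$ (k, l))" by (simp add: mod_eq_dvd_iff)
      then show ?thesis using that by (simp add: Y_def)
    qed
    have "2 * (\<Sum>i<d. Y $$ (i, i)) = (\<Sum>i<d. a $$ (i, i)) - (\<Sum>i<d. a' $$ (i, i))"
      by (simp add: sum_distrib_left ev2 sum_subtractf)
    also have "\<dots> = 0" using a ac by (simp add: sl_def mtrace_def)
    finally have "(\<Sum>i<d. Y $$ (i, i)) = 0" by simp
    then have Ysl: "Y \<in> sl d" by (simp add: sl_def mtrace_def Y_def)
    have "2 \<cdot>\<^sub>m Y = a - a'" using ac ev2 by (intro eq_matI) (auto simp: Y_def)
    then have dW: "a - a' \<in> W" using two[OF Ysl] by simp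
    show ?thesis
    proof
      fix x assume "x \<in> (+) a ` W"
      then obtain w where w: "w \<in> W" "x = a + w" by blast
      have wc: "w \<in> carrier_mat d d" using w Wsl by (auto simp: sl_def)
      have "x = a' + ((a - a') + w)" using w ac wc by (intro eq_matI) auto
      then show "x \<in> (+) a' ` W" using add[OF dW w(1)] by blast
    qed
  qed
  define pick where "pick R = (SOME a. a \<in> sl d \<and> ?r a = R)" for R
  define h where "h R = (+) (pick R) ` W" for R
  have "sl_cosets d W \<subseteq> h ` (?r ` sl d)"
  proof
    fix C assume "C \<in> sl_cosets d W"
    then obtain a where a: "a \<in> sl d" "C = (+) a ` W" unfolding sl_cosets_def by blast
    have "\<exists>b. b \<in> sl d \<and> ?r b = ?r a" using a by blast
    then have pa: "pick (?r a) \<in> sl d" "?r (pick (?r a)) = ?r a"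
      unfolding pick_def by (metis (mono_tags, lifting) someI_ex)+
    have "C = h (?r a)" unfolding h_def a(2)
      by (rule subset_antisym[OF one_dir[OF a(1) pa(1) pa(2)[symmetric]] one_dir[OF pa(1) a(1) pa(2)]])
    then show "C \<in> h ` (?r ` sl d)" using a by blast
  qed
  moreover have rT: "?r ` sl d \<subseteq> ?T"
  proof
    fix M assume "M \<in> ?r ` sl d"
    then obtain a where a: "a \<in> sl d" "M = ?r a" by blast
    have "x mod 2 \<in> {0, 1}" for x :: int using pos_mod_sign[of 2 x] pos_mod_bound[of 2 x] by auto
    then show "M \<in> ?T" using a by (auto simp: sl_def)
  qed
  moreover have fT: "finite ?T" and cT: "card ?T \<le> 2 ^ (d * d)" using card_T by blast+
  ultimately have sub: "sl_cosets d W \<subseteq> h ` (?r ` sl d)" and fr: "finite (?r ` sl d)"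
    using finite_subset[OF rT fT] by auto
  have fh: "finite (h ` (?r ` sl d))" using fr by blast
  have "card (sl_cosets d W) \<le> card (h ` (?r ` sl d))" using card_mono[OF fh sub] .
  also have "\<dots> \<le> card (?r ` sl d)" using card_image_le[OF fr] .
  also have "\<dots> \<le> card ?T" using card_mono[OF fT rT] .
  finally show ?thesis using cT finite_subset[OF sub fh] by simp
qed


lemma hyper_part:
  fixes S :: "int mat set" and A :: "real mat set" and c :: "int mat"
  assumes d: "d \<ge> 1" and cS: "c \<in> S" and Sc: "S \<subseteq> carrier_mat d d"
    and cc: "c \<in> carrier_mat d d" and ctr: "(\<Sum>i<d. c $$ (i, i)) = 0"
    and SA: "map_mat real_of_int ` S \<subseteq> A" and aff: "affine_sub d A"
    and two: "\<And>W X. 0\<^sub>m d d \<in> W \<Longrightarrow> (\<And>x y. x \<in> W \<Longrightarrow> y \<in> W \<Longrightarrow> x + y \<in> W)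
       \<Longrightarrow> (\<And>x. x \<in> W \<Longrightarrow> - x \<in> W) \<Longrightarrow> (\<And>s s'. s \<in> S \<Longrightarrow> s' \<in> S \<Longrightarrow> s - s' \<in> W)
       \<Longrightarrow> X \<in> carrier_mat d d \<Longrightarrow> (\<Sum>i<d. X $$ (i, i)) = 0 \<Longrightarrow> 2 \<cdot>\<^sub>m X \<in> W"
  shows "sl_real d \<subseteq> A"
proof -
  have Asl: "A \<subseteq> sl_real d" and line: "\<And>x y t. x \<in> A \<Longrightarrow> y \<in> A \<Longrightarrow> (1 - t) \<cdot>\<^sub>m x + t \<cdot>\<^sub>m y \<in> A"
    using aff unfolding affine_sub_def by auto
  have Ac: "x \<in> carrier_mat d d" if "x \<in> A" for x using that Asl by (auto simp: sl_real_def)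
  have af2: "x + y - z \<in> A" if "x \<in> A" "y \<in> A" "z \<in> A" for x y z
  proof -
    let ?m = "(1 - 1/2) \<cdot>\<^sub>m x + (1/2) \<cdot>\<^sub>m y"
    have m: "?m \<in> A" using line[OF that(1,2)] .
    have "(1 - 2) \<cdot>\<^sub>m z + 2 \<cdot>\<^sub>m ?m \<in> A" using line[OF that(3) m] .
    moreover have "(1 - 2) \<cdot>\<^sub>m z + 2 \<cdot>\<^sub>m ?m = x + y - z"
      using Ac[OF that(1)] Ac[OF that(2)] Ac[OF that(3)] by (intro eq_matI) auto
    ultimately show ?thesis by simp
  qed
  define V where "V = {Y. Y \<in> carrier_mat d d \<and> (\<forall>x\<in>A. x + Y \<in> A)}"
  have V0: "0\<^sub>m d d \<in> V"
  proof -
    have "x + 0\<^sub>m d d = x" if "x \<in> A" for x using Ac[OF that] by simp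
    then show ?thesis by (simp add: V_def)
  qed
  have Vadd: "Y + Z \<in> V" if "Y \<in> V" "Z \<in> V" for Y Z
  proof -
    have "x + (Y + Z) = (x + Y) + Z" if "x \<in> A" for x
      using Ac[OF that] \<open>Y \<in> V\<close> \<open>Z \<in> V\<close> by (simp add: V_def assoc_add_mat)
    then show ?thesis using that by (auto simp: V_def)
  qed
  have Vsc: "r \<cdot>\<^sub>m Y \<in> V" if "Y \<in> V" for Y r
  proof -
    have "x + r \<cdot>\<^sub>m Y \<in> A" if "x \<in> A" for x
    proof -
      have xy: "x + Y \<in> A" using \<open>Y \<in> V\<close> that by (auto simp: V_def)
      have "(1 - r) \<cdot>\<^sub>m x + r \<cdot>\<^sub>m (x + Y) = x + r \<cdot>\<^sub>m Y"
        using Ac[OF that] \<open>Y \<in> V\<close> by (intro eq_matI) (auto simp: V_def algebra_simps)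
      then show ?thesis using line[OF that xy, of r] by simp
    qed
    then show ?thesis using \<open>Y \<in> V\<close> by (auto simp: V_def)
  qed
  define WI where "WI = {X :: int mat. X \<in> carrier_mat d d \<and> map_mat real_of_int X \<in> V}"
  have WI0: "0\<^sub>m d d \<in> WI"
  proof -
    have "map_mat real_of_int (0\<^sub>m d d) = 0\<^sub>m d d" by (intro eq_matI) auto
    then show ?thesis using V0 by (simp add: WI_def)
  qed
  have WIadd: "x + y \<in> WI" if "x \<in> WI" "y \<in> WI" for x y
  proof -
    have "map_mat real_of_int (x + y) = map_mat real_of_int x + map_mat real_of_int y"
      using that by (intro eq_matI) (auto simp: WI_def)
    then show ?thesis using that Vadd by (auto simp: WI_def)
  qed
  have WIneg: "- x \<in> WI" if "x \<in> WI" for x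
  proof -
    have "map_mat real_of_int (- x) = (-1) \<cdot>\<^sub>m map_mat real_of_int x"
      using that by (intro eq_matI) (auto simp: WI_def)
    then show ?thesis using that Vsc by (auto simp: WI_def)
  qed
  have WIdiff: "s - s' \<in> WI" if "s \<in> S" "s' \<in> S" for s s'
  proof -
    have sc: "s \<in> carrier_mat d d" "s' \<in> carrier_mat d d" using that Sc by auto
    have sA: "map_mat real_of_int s \<in> A" "map_mat real_of_int s' \<in> A" using that SA by auto
    have "x + map_mat real_of_int (s - s') \<in> A" if "x \<in> A" for x
    proof -
      have "x + map_mat real_of_int (s - s') = x + map_mat real_of_int s - map_mat real_of_int s'"
        using sc Ac[OF that] by (intro eq_matI) auto
      then show ?thesis using af2[OF that sA] by simp
    qed
    then show ?thesis using sc by (auto simp: WI_def V_def)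
  qed
  have gen: "r \<cdot>\<^sub>m Bm d k l \<in> V" if kl: "k < d" "l < d" "(k, l) \<noteq> (d - 1, d - 1)" for k l r
  proof -
    have "(\<Sum>i<d. (Bm d k l :: int mat) $$ (i, i)) = 0" by (rule trace_Bm[OF kl])
    then have "2 \<cdot>\<^sub>m (Bm d k l :: int mat) \<in> WI"
      by (intro two[OF WI0 WIadd WIneg WIdiff]) auto
    then have "(r / 2) \<cdot>\<^sub>m map_mat real_of_int (2 \<cdot>\<^sub>m (Bm d k l :: int mat)) \<in> V"
      using Vsc by (auto simp: WI_def)
    moreover have "(r / 2) \<cdot>\<^sub>m map_mat real_of_int (2 \<cdot>\<^sub>m (Bm d k l :: int mat)) = r \<cdot>\<^sub>m Bm d k l"
      by (intro eq_matI) auto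
    ultimately show ?thesis by simp
  qed
  let ?c = "map_mat real_of_int c"
  have cA: "?c \<in> A" using cS SA by auto
  show ?thesis
  proof
    fix y assume y: "y \<in> sl_real d"
    have yc: "y \<in> carrier_mat d d" and ytr: "(\<Sum>i<d. y $$ (i, i)) = 0"
      using y by (auto simp: sl_real_def mtrace_def)
    define X where "X = y - ?c"
    have Xc: "X \<in> carrier_mat d d" unfolding X_def using yc cc by (intro minus_carrier_mat) auto
    have "(\<Sum>i<d. X $$ (i, i)) = (\<Sum>i<d. y $$ (i, i)) - (\<Sum>i<d. real_of_int (c $$ (i, i)))"
      using yc cc by (simp add: X_def sum_subtractf)
    also have "\<dots> = 0" using ytr ctr by (metis diff_self of_int_0 of_int_sum)
    finally have Xtr: "(\<Sum>i<d. X $$ (i, i)) = 0" .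
    have "X \<in> V" by (rule decomp[OF V0 Vadd Xc Xtr d]) (use gen in auto)
    then have "?c + X \<in> A" using cA by (auto simp: V_def)
    moreover have "?c + X = y" using yc cc by (intro eq_matI) (auto simp: X_def)
    ultimately show "y \<in> A" by simp
  qed
qed


theorem proposition6p1:
  fixes d :: nat and es :: "(nat \<times> nat) list"
  assumes "d \<ge> 2"
    and "distinct es"
    and "set es = {(i, j). i < d \<and> j < d \<and> i \<noteq> j}"
  shows "\<exists>Q N :: nat. N \<ge> 1 \<and>
    (\<forall>p :: int poly. lead_coeff p = 1 \<and> degree p = d \<and> companion d p \<in> sl d \<longrightarrow>
       coset_fleeing d Q (orbit d es N (companion d p)) \<and>
       hyperplane_fleeing d (map_mat real_of_int ` orbit d es N (companion d p)))"
proof -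
  have d: "d \<ge> 2" using assms(1) .
  have es: "set es = {(i, j). i < d \<and> j < d \<and> i \<noteq> j}" using assms(3) .
  have alles: "\<And>a b. a < d \<Longrightarrow> b < d \<Longrightarrow> a \<noteq> b \<Longrightarrow> (a, b) \<in> set es" unfolding es by blast
  have 01: "(0, 1) \<in> set es" by (rule alles) (use d in auto)
  have ne: "es \<noteq> []" using 01 by auto
  have v: "valid_es d es" unfolding valid_es_def using ne es by auto
  have lpos: "length es \<ge> 1" using ne by (cases es) auto
  show ?thesis
  proof (intro exI conjI allI impI)
    show "1 \<le> 4 * length es" using lpos by simp
  next
    fix p :: "int poly"
    assume p: "lead_coeff p = 1 \<and> degree p = d \<and> companion d p \<in> sl d"
    let ?c = "companion d p"
    let ?S = "orbit d es (4 * length es) ?c"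
    have "mtrace ?c = 0" using p by (simp add: sl_def)
    moreover have "dim_row ?c = d" by (simp add: companion_def)
    ultimately have ctr: "(\<Sum>i<d. ?c $$ (i, i)) = 0" unfolding mtrace_def by metis
    have two: "2 \<cdot>\<^sub>m X \<in> W"
      if "0\<^sub>m d d \<in> W" "\<And>x y. x \<in> W \<Longrightarrow> y \<in> W \<Longrightarrow> x + y \<in> W"
       "\<And>x. x \<in> W \<Longrightarrow> - x \<in> W" "\<And>s s'. s \<in> ?S \<Longrightarrow> s' \<in> ?S \<Longrightarrow> s - s' \<in> W"
       "X \<in> carrier_mat d d" "(\<Sum>i<d. X $$ (i, i)) = 0" for W X
      by (rule core[OF d v alles that])
    have cS: "?c \<in> ?S"
    proof -
      have "cj d 0 1 0 (cj d 0 1 0 (cj d 0 1 0 (cj d 0 1 0 ?c))) \<in> ?S"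
        by (rule orbit4[OF v companion_carrier 01 01 01 01])
      moreover have "cj d 0 1 0 M = M" if "M \<in> carrier_mat d d" for M
        by (rule cj_zero[OF that]) (use d in auto)
      ultimately show ?thesis by (simp del: companion_index)
    qed
    show "coset_fleeing d (2 ^ (d * d)) ?S"
      unfolding coset_fleeing_def
    proof (intro allI impI notI)
      fix W assume W: "sl_subgroup d W \<and> index_gt d W (2 ^ (d * d))"
        and ex: "\<exists>C\<in>sl_cosets d W. ?S \<subseteq> C"
      have Wsl: "W \<subseteq> sl d" and z: "0\<^sub>m d d \<in> W" and add: "\<And>x y. x \<in> W \<Longrightarrow> y \<in> W \<Longrightarrow> x + y \<in> W"
        and neg: "\<And>x. x \<in> W \<Longrightarrow> - x \<in> W" using W unfolding sl_subgroup_def by auto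
      obtain a where a: "a \<in> sl d" "?S \<subseteq> (+) a ` W" using ex unfolding sl_cosets_def by blast
      have diff: "s - s' \<in> W" if ss: "s \<in> ?S" "s' \<in> ?S" for s s'
      proof -
        obtain w w' where w: "w \<in> W" "s = a + w" "w' \<in> W" "s' = a + w'" using a ss by blast
        have c: "a \<in> carrier_mat d d" "w \<in> carrier_mat d d" "w' \<in> carrier_mat d d"
          using a w Wsl by (auto simp: sl_def)
        have "s - s' = w + - w'" using c w by (intro eq_matI) auto
        then show ?thesis using add[OF w(1) neg[OF w(3)]] by simp
      qed
      have tw: "2 \<cdot>\<^sub>m X \<in> W" if X: "X \<in> sl d" for X
      proof -
        have Xc: "X \<in> carrier_mat d d" using X by (simp add: sl_def)
        have "(\<Sum>i<d. X $$ (i, i)) = 0" using X Xc by (simp add: sl_def mtrace_def)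
        then show ?thesis using two[of W X] z add neg diff Xc by blast
      qed
      have "finite (sl_cosets d W) \<and> card (sl_cosets d W) \<le> 2 ^ (d * d)"
        by (rule coset_part[OF conjunct1[OF W] tw])
      then show False using conjunct2[OF W] unfolding index_gt_def by simp
    qed
    show "hyperplane_fleeing d (map_mat real_of_int ` ?S)"
      unfolding hyperplane_fleeing_def
    proof (intro allI impI notI)
      fix A assume A: "affine_sub d A \<and> A \<noteq> sl_real d" and SA: "map_mat real_of_int ` ?S \<subseteq> A"
      have Asl: "A \<subseteq> sl_real d" using A unfolding affine_sub_def by auto
      have Sc: "?S \<subseteq> carrier_mat d d"
      proof
        fix s assume "s \<in> ?S"
        then have "map_mat real_of_int s \<in> sl_real d" using SA Asl by auto
        then show "s \<in> carrier_mat d d" by (auto simp: sl_real_def)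
      qed
      have d1: "d \<ge> 1" using d by simp
      have "sl_real d \<subseteq> A"
        by (rule hyper_part[OF d1 cS Sc companion_carrier ctr SA conjunct1[OF A] two])
      then show False using A Asl by blast
    qed
  qed
qed


end
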